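(* For any values of $k$, $\mu$, and $\nu$, \[ \,_{2}F_{3}\left(\tfrac{1}{2},\tfrac{\mu}{2}+\tfrac{\nu}{2}+1;\mu+1,\nu+1,\mu+\nu+1;-k^{2}\right) =\frac{2^{2(\mu+\nu)-3}(\mu+\nu-1)\Gamma(\mu+1)\Gamma(\nu+1)}{\pi\,\Gamma(\mu+\nu-1)} \sum_{L=0}^{\infty}\frac{(-1)^{2L}k^{4L}2^{4L-2\mu-2\nu+2}\left(\left(\frac{\mu}{2}+\frac{\nu}{2}\right)_{2L}\right)^{2}\Gamma(2L+\mu+\nu-1)}{(2L)!\left(L+\frac{1}{2}\right)_{\mu+\frac{1}{2}}\left(L+\frac{1}{2}\right)_{\nu+\frac{1}{2}}\left(2L+\frac{\mu}{2}+\frac{\nu}{2}-\frac{1}{2}\right)\left((\mu+\nu-1)_{2L}\right)^{2}\left((2L+\mu+\nu-1)_{2L}\right)^{2}} \,_{1}F_{2}\left(L+\tfrac{1}{2};L+\mu+1,2L+\tfrac{\mu}{2}+\tfrac{\nu}{2}+\tfrac{1}{2};-\tfrac{k^{2}}{4}\right)\,_{1}F_{2}\left(L+\tfrac{1}{2};2L+\tfrac{\mu}{2}+\tfrac{\nu}{2}+\tfrac{1}{2},L+\nu+1;-\tfrac{k^{2}}{4}\right). \]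
   Context: $\,_{p}F_{q}(a_1,\dots,a_p;b_1,\dots,b_q;z)=\sum_{n\ge0}\frac{(a_1)_n\cdots(a_p)_n}{(b_1)_n\cdots(b_q)_n}\frac{z^n}{n!}$ is the generalized hypergeometric function. $(c)_g=\Gamma(c+g)/\Gamma(c)$ denotes the Pochhammer symbol (for arbitrary $g$). *)

theory Defs
  imports "HOL-Analysis.Analysis"
begin

definition hypergeo :: "complex list \<Rightarrow> complex list \<Rightarrow> complex \<Rightarrow> complex" where
  "hypergeo as bs z =
     (\<Sum>n. (\<Prod>a\<leftarrow>as. pochhammer a n) / (\<Prod>b\<leftarrow>bs. pochhammer b n) * z ^ n / fact n)"

definition gen_poch :: "complex \<Rightarrow> complex \<Rightarrow> complex" where
  "gen_poch c g = Gamma (c + g) / Gamma c"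

end

theory Submission
  imports Defs
begin

definition Gf :: "complex \<Rightarrow> nat \<Rightarrow> nat \<Rightarrow> complex" where
  "Gf c p L = (if L \<le> p then fact (2*p) / (fact (2*L) * 16^(p-L) * pochhammer (c + of_nat (2*L)) (p-L) * fact (p-L)) else 0)"

lemma poch_nz:
  assumes cn: "\<And>n::nat. c + of_nat n \<noteq> (0::complex)"
  shows "pochhammer (c + of_nat x) m \<noteq> 0"
proof
  assume "pochhammer (c + of_nat x) m = 0"
  then obtain k where k: "c + of_nat x = - of_nat k" by (auto simp: pochhammer_eq_0_iff)
  have "c + of_nat (x + k) = (c + of_nat x) + of_nat k" by simp
  also have "\<dots> = 0" using k by simp
  finally show False using cn by blast
qed

lemma Gf_diag: "Gf c L L = 1"
  by (simp add: Gf_def)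

lemma Gf_zero: "p < L \<Longrightarrow> Gf c p L = 0"
  by (simp add: Gf_def)

lemma Gf_Lm: "Gf c (L+m) L = fact (2*(L+m)) / (fact (2*L) * 16^m * pochhammer (c + of_nat (2*L)) m * fact m)"
  by (simp add: Gf_def)

lemma fact2_step: "(fact (2*(n+1)) :: complex) = fact (2*n) * (of_nat (2*n) + 1) * (of_nat (2*n) + 2)"
proof -
  have e1: "2*(n+1) = Suc (Suc (2*n))" by simp
  show ?thesis unfolding e1 fact_Suc by (simp add: algebra_simps)
qed

lemma Gf_r1:
  assumes cn: "\<And>n::nat. c + of_nat n \<noteq> (0::complex)"
  shows "Gf c (L+m+1) L * (16 * (c + of_nat (2*L) + of_nat m) * (of_nat m + 1)) = Gf c (L+m) L * ((of_nat (2*(L+m)) + 1) * (of_nat (2*(L+m)) + 2))"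
proof -
  have G1: "Gf c (L+m+1) L = fact (2*((L+m)+1)) / (fact (2*L) * 16^(m+1) * pochhammer (c + of_nat (2*L)) (m+1) * fact (m+1))"
    using Gf_Lm[of c L "m+1"] by (simp add: add.assoc)
  have p1: "pochhammer (c + of_nat (2*L)) (m+1) = pochhammer (c + of_nat (2*L)) m * (c + of_nat (2*L) + of_nat m)"
    by (simp add: pochhammer_Suc)
  have fm: "(fact (m+1) :: complex) = (of_nat m + 1) * fact m" by simp
  have nz1: "pochhammer (c + of_nat (2*L)) m \<noteq> 0" by (rule poch_nz[OF cn])
  have nz2: "c + of_nat (2*L) + of_nat m \<noteq> 0" using cn[of "2*L+m"] by (simp add: add.assoc)
  have nz3: "(of_nat m + 1 :: complex) \<noteq> 0" by (metis of_nat_Suc of_nat_eq_0_iff Suc_neq_Zero add.commute)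
  define P where "P = pochhammer (c + of_nat (2*L)) m"
  define Q where "Q = c + of_nat (2*L) + of_nat m"
  define F where "F = (fact (2*(L+m)) :: complex)"
  define R where "R = (of_nat m + 1 :: complex)"
  have e1: "Gf c (L+m+1) L = F * (of_nat (2*(L+m)) + 1) * (of_nat (2*(L+m)) + 2) / (fact (2*L) * (16 * 16^m) * (P * Q) * (R * fact m))"
    unfolding G1 p1 fm fact2_step P_def Q_def F_def R_def by simp
  have e2: "Gf c (L+m) L = F / (fact (2*L) * 16^m * P * fact m)"
    unfolding Gf_Lm F_def P_def by simp
  show ?thesis unfolding e1 e2 using nz1 nz2 nz3 unfolding P_def[symmetric] Q_def[symmetric] R_def[symmetric]
    by (simp add: field_simps)
qed

lemma cross_mult:
  fixes F D1 D2 N1 N2 :: complex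
  assumes "D1 \<noteq> 0" "D2 \<noteq> 0" "F * N1 * D2 = F * N2 * D1"
  shows "F / D1 * N1 = F / D2 * N2"
  using assms by (simp add: field_simps)

lemma r23_alg:
  fixes P1 P2 x m F A B C l :: complex
  assumes "P1 * (x + m + 1) = x * (x + 1) * P2"
  shows "F * (16 * (m + 1) * x * (x + 1)) * (A * (l + 1) * (l + 2) * B * P2 * C) =
         F * ((l + 1) * (l + 2) * (x + m + 1)) * (A * (16 * B) * P1 * ((m + 1) * C))"
  using assms by algebra

lemma poch_shift2: "pochhammer (x::complex) (m+1) * (x + of_nat m + 1) = x * (x + 1) * pochhammer (x + 2) m"
proof -
  have "pochhammer x (Suc (Suc m)) = pochhammer x (m+1) * (x + of_nat m + 1)"
    by (simp add: pochhammer_Suc add.assoc)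
  moreover have "pochhammer x (Suc (Suc m)) = x * ((x + 1) * pochhammer (x + 2) m)"
    by (simp add: pochhammer_rec add.assoc one_add_one)
  ultimately show ?thesis by (simp add: mult.assoc)
qed

lemma Gf_r23:
  assumes cn: "\<And>n::nat. c + of_nat n \<noteq> (0::complex)"
  shows "Gf c (L+(m+1)) L * (16 * (of_nat m + 1) * (c + of_nat (2*L)) * (c + of_nat (2*L) + 1))
       = Gf c ((L+1)+m) (L+1) * ((of_nat (2*L) + 1) * (of_nat (2*L) + 2) * (c + of_nat (2*L) + of_nat m + 1))"
proof -
  define x where "x = c + of_nat (2*L)"
  have G1: "Gf c (L+(m+1)) L = fact (2*(L+m+1)) / (fact (2*L) * 16^(m+1) * pochhammer x (m+1) * fact (m+1))"
    using Gf_Lm[of c L "m+1"] by (simp add: add.assoc x_def)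
  have G2: "Gf c ((L+1)+m) (L+1) = fact (2*(L+m+1)) / (fact (2*(L+1)) * 16^m * pochhammer (x+2) m * fact m)"
    using Gf_Lm[of c "L+1" m] by (simp add: x_def add_ac)
  have fm: "(fact (m+1) :: complex) = (of_nat m + 1) * fact m" by simp
  have nz1: "pochhammer x (m+1) \<noteq> 0" unfolding x_def by (rule poch_nz[OF cn])
  have nz2: "pochhammer (x+2) m \<noteq> 0" using poch_nz[OF cn, of "2*L+2" m] by (simp add: x_def add_ac)
  have nz3: "(of_nat m + 1 :: complex) \<noteq> 0" by (metis of_nat_Suc of_nat_eq_0_iff Suc_neq_Zero add.commute)
  have nz4: "x + of_nat m + 1 \<noteq> 0" using cn[of "2*L+m+1"] by (simp add: x_def add_ac)
  have nz5: "(of_nat (2*L) + 1 :: complex) \<noteq> 0" by (metis of_nat_Suc of_nat_eq_0_iff Suc_neq_Zero add.commute)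
  have nz6: "(of_nat (2*L) + 2 :: complex) \<noteq> 0"
    by (metis add_2_eq_Suc' of_nat_eq_0_iff Suc_neq_Zero of_nat_numeral of_nat_add)
  have nz7: "x \<noteq> 0" using cn[of "2*L"] by (simp add: x_def)
  have nz8: "x + 1 \<noteq> 0" using cn[of "2*L+1"] by (simp add: x_def add_ac)
  have key: "pochhammer x (m+1) * (x + of_nat m + 1) = x * (x + 1) * pochhammer (x + 2) m" by (rule poch_shift2)
  define P1 where "P1 = pochhammer x (m+1)"
  define P2 where "P2 = pochhammer (x+2) m"
  define F where "F = (fact (2*(L+m+1)) :: complex)"
  have e1: "Gf c (L+(m+1)) L = F / (fact (2*L) * (16 * 16^m) * P1 * ((of_nat m + 1) * fact m))"
    unfolding G1 fm P1_def F_def by simp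
  have e2: "Gf c ((L+1)+m) (L+1) = F / (fact (2*L) * (of_nat (2*L) + 1) * (of_nat (2*L) + 2) * 16^m * P2 * fact m)"
    unfolding G2 P2_def F_def fact2_step by simp
  have key2: "P1 * (x + of_nat m + 1) = x * (x + 1) * P2" using key unfolding P1_def P2_def .
  show ?thesis unfolding e1 e2 x_def[symmetric]
    apply (rule cross_mult)
    subgoal using nz1 nz3 unfolding P1_def by simp
    subgoal using nz2 nz5 nz6 unfolding P2_def by simp
    using r23_alg[OF key2] .
qed

definition Af :: "complex \<Rightarrow> complex \<Rightarrow> complex" where
  "Af c l = (2*l) * (2*l-1) / ((2*l+c-2) * (2*l+c-1))"
definition Bf :: "complex \<Rightarrow> complex \<Rightarrow> complex" where
  "Bf c l = (2*l+2*c-1) * (2*l+2*c-2) / ((2*l+c) * (2*l+c-1))"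
definition betaf :: "complex \<Rightarrow> complex \<Rightarrow> complex" where
  "betaf c l = (4 - Af c l - Bf c l) / 16"
definition gammaf :: "complex \<Rightarrow> complex \<Rightarrow> complex" where
  "gammaf c l = (2*l+1) * (2*l+2) * (2*l+2*c-2) * (2*l+2*c-1) / (256 * (2*l+c+1) * (2*l+c-1) * (2*l+c)^2)"

lemma rec_alg1:
  fixes c l m :: complex
  assumes nz: "c+2*l+m \<noteq> 0" "m+1 \<noteq> 0" "2*l+c-1 \<noteq> 0" "2*l+c \<noteq> 0" "2*l+c+1 \<noteq> 0" "2*l+1 \<noteq> 0" "2*l+2 \<noteq> 0" "2*l+c-2 \<noteq> 0"
  shows "(2*(l+m)+1)*(2*(l+m)+2)/(16*(c+2*l+m)*(m+1)) = (2*l-1)*(2*l)*(c+2*l+m-1)/(16*(m+1)*(2*l+c-2)*(2*l+c-1)) + betaf c l + gammaf c l * (16*m*(c+2*l)*(c+2*l+1)/((2*l+1)*(2*l+2)*(c+2*l+m)))"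
proof -
  have i: "\<And>x::complex. x \<noteq> 0 \<Longrightarrow> x * inverse x = 1" by simp
  note I = i[OF nz(1)] i[OF nz(2)] i[OF nz(3)] i[OF nz(4)] i[OF nz(5)] i[OF nz(6)] i[OF nz(7)] i[OF nz(8)]
  show ?thesis unfolding betaf_def gammaf_def Af_def Bf_def
    apply (simp only: divide_inverse inverse_mult_distrib power2_eq_square)
    using I by algebra
qed

lemma rec_alg0:
  fixes c m :: complex
  assumes nz: "c+m \<noteq> 0" "m+1 \<noteq> 0" "c-1 \<noteq> 0" "c \<noteq> 0" "c+1 \<noteq> 0"
  shows "(2*m+1)*(2*m+2)/(16*(c+m)*(m+1)) = betaf c 0 + gammaf c 0 * (16*m*c*(c+1)/(2*(c+m)))"
proof -
  have i: "\<And>x::complex. x \<noteq> 0 \<Longrightarrow> x * inverse x = 1" by simp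
  note I = i[OF nz(1)] i[OF nz(2)] i[OF nz(3)] i[OF nz(4)] i[OF nz(5)]
  show ?thesis unfolding betaf_def gammaf_def Af_def Bf_def
    apply (simp only: divide_inverse inverse_mult_distrib power2_eq_square)
    using I by algebra
qed

lemma solve_div: "(d::complex) \<noteq> 0 \<Longrightarrow> x * d = y \<Longrightarrow> x = y / d"
  by (simp add: field_simps)

lemma of_nat_ne_neg: "(of_nat n :: complex) + 1 \<noteq> 0" "(2 * of_nat n :: complex) + 1 \<noteq> 0" "(2 * of_nat n :: complex) + 2 \<noteq> 0"
proof -
  show "(of_nat n :: complex) + 1 \<noteq> 0" by (metis of_nat_Suc of_nat_eq_0_iff Suc_neq_Zero add.commute)
  show "(2 * of_nat n :: complex) + 1 \<noteq> 0" using of_nat_eq_0_iff[of "2*n+1", where 'a=complex] by (simp add: add.commute)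
  show "(2 * of_nat n :: complex) + 2 \<noteq> 0" using of_nat_eq_0_iff[of "2*n+2", where 'a=complex] by (simp add: add.commute)
qed

lemma Gf_rec:
  assumes cn: "\<And>n::nat. c + of_nat n \<noteq> (0::complex)" and c1: "c \<noteq> 1"
  shows "Gf c (p+1) L = (if L = 0 then 0 else Gf c p (L-1)) + betaf c (of_nat L) * Gf c p L + gammaf c (of_nat L) * Gf c p (L+1)"
proof -
  consider "p + 1 < L" | "L = p + 1" | "L \<le> p" by linarith
  then show ?thesis
  proof cases
    case 1
    then show ?thesis by (simp add: Gf_zero)
  next
    case 2
    then show ?thesis by (simp add: Gf_zero Gf_diag)
  next
    case 3
    then obtain m where pm: "p = L + m" using le_Suc_ex by blast
    define g where "g = Gf c (L+m) L"
    define l where "l = (of_nat L :: complex)"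
    define mm where "mm = (of_nat m :: complex)"
    have nzA: "c + 2*l + mm \<noteq> 0" using cn[of "2*L+m"] by (simp add: l_def mm_def add_ac)
    have nzB: "mm + 1 \<noteq> 0" unfolding mm_def by (rule of_nat_ne_neg)
    have nzC: "2*l+c \<noteq> 0" "2*l+c+1 \<noteq> 0" using cn[of "2*L"] cn[of "2*L+1"] by (simp_all add: l_def add_ac)
    have nzD: "2*l+1 \<noteq> 0" "2*l+2 \<noteq> 0" unfolding l_def by (rule of_nat_ne_neg)+
    have nzE: "2*l+c-1 \<noteq> 0"
    proof (cases L)
      case 0 then show ?thesis using c1 by (simp add: l_def)
    next
      case (Suc l')
      then show ?thesis using cn[of "2*l'+1"] by (simp add: l_def algebra_simps)
    qed
    have h1: "Gf c (p+1) L = g * ((2*(l+mm)+1)*(2*(l+mm)+2)/(16*(c+2*l+mm)*(mm+1)))"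
    proof -
      have "Gf c (L+m+1) L * (16 * (c + of_nat (2*L) + of_nat m) * (of_nat m + 1)) = g * ((of_nat (2*(L+m)) + 1) * (of_nat (2*(L+m)) + 2))"
        unfolding g_def by (rule Gf_r1[OF cn])
      then have "Gf c (L+m+1) L * (16 * (c+2*l+mm) * (mm+1)) = g * ((2*(l+mm)+1)*(2*(l+mm)+2))"
        by (simp add: l_def mm_def)
      moreover have "16 * (c+2*l+mm) * (mm+1) \<noteq> 0" using nzA nzB by (metis mult_eq_0_iff zero_neq_numeral)
      ultimately show ?thesis unfolding pm using solve_div by simp
    qed
    have h3: "Gf c p (L+1) = g * (16*mm*(c+2*l)*(c+2*l+1)/((2*l+1)*(2*l+2)*(c+2*l+mm)))"
    proof (cases m)
      case 0
      then show ?thesis by (simp add: pm Gf_zero mm_def)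
    next
      case (Suc m')
      have "Gf c (L+(m'+1)) L * (16 * (of_nat m' + 1) * (c + of_nat (2*L)) * (c + of_nat (2*L) + 1))
       = Gf c ((L+1)+m') (L+1) * ((of_nat (2*L) + 1) * (of_nat (2*L) + 2) * (c + of_nat (2*L) + of_nat m' + 1))"
        by (rule Gf_r23[OF cn])
      then have "g * (16 * mm * (c+2*l) * (c+2*l+1)) = Gf c p (L+1) * ((2*l+1)*(2*l+2)*(c+2*l+mm))"
        by (simp add: g_def pm Suc l_def mm_def add_ac)
      then have "Gf c p (L+1) * ((2*l+1)*(2*l+2)*(c+2*l+mm)) = g * (16 * mm * (c+2*l) * (c+2*l+1))" by simp
      moreover have "(2*l+1)*(2*l+2)*(c+2*l+mm) \<noteq> 0" using nzA nzD by (metis mult_eq_0_iff)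
      ultimately show ?thesis using solve_div by simp
    qed
    show ?thesis
    proof (cases L)
      case 0
      have "Gf c (p+1) L = g * (betaf c l + gammaf c l * (16*mm*(c+2*l)*(c+2*l+1)/((2*l+1)*(2*l+2)*(c+2*l+mm))))"
      proof -
        have "(2*mm+1)*(2*mm+2)/(16*(c+mm)*(mm+1)) = betaf c 0 + gammaf c 0 * (16*mm*c*(c+1)/(2*(c+mm)))"
          apply (rule rec_alg0)
          using nzA nzB nzC nzE by (simp_all add: l_def 0)
        then show ?thesis unfolding h1 by (simp add: l_def 0)
      qed
      then show ?thesis using h3 by (simp add: 0 g_def pm l_def algebra_simps)
    next
      case (Suc l')
      define l1 where "l1 = (of_nat l' :: complex)"
      have ll: "l = l1 + 1" by (simp add: l_def l1_def Suc)
      have h2: "Gf c p (L-1) = g * ((2*l-1)*(2*l)*(c+2*l+mm-1)/(16*(mm+1)*(2*l+c-2)*(2*l+c-1)))"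
      proof -
        have "Gf c (l'+(m+1)) l' * (16 * (of_nat m + 1) * (c + of_nat (2*l')) * (c + of_nat (2*l') + 1))
         = Gf c ((l'+1)+m) (l'+1) * ((of_nat (2*l') + 1) * (of_nat (2*l') + 2) * (c + of_nat (2*l') + of_nat m + 1))"
          by (rule Gf_r23[OF cn])
        then have "Gf c p (L-1) * (16 * (mm + 1) * (2*l+c-2) * (2*l+c-1)) = g * ((2*l-1)*(2*l)*(c+2*l+mm-1))"
          by (simp add: g_def pm Suc ll l1_def mm_def algebra_simps)
        moreover have "2*l+c-2 \<noteq> 0" using cn[of "2*l'"] by (simp add: ll l1_def algebra_simps)
        moreover have "16 * (mm + 1) * (2*l+c-2) * (2*l+c-1) \<noteq> 0" using nzB nzE calculation(2) by (metis mult_eq_0_iff zero_neq_numeral)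
        ultimately show ?thesis using solve_div by simp
      qed
      have "2*l+c-2 \<noteq> 0" using cn[of "2*l'"] by (simp add: ll l1_def algebra_simps)
      then have ra: "(2*(l+mm)+1)*(2*(l+mm)+2)/(16*(c+2*l+mm)*(mm+1)) = (2*l-1)*(2*l)*(c+2*l+mm-1)/(16*(mm+1)*(2*l+c-2)*(2*l+c-1)) + betaf c l + gammaf c l * (16*mm*(c+2*l)*(c+2*l+1)/((2*l+1)*(2*l+2)*(c+2*l+mm)))"
        using nzA nzB nzC nzD nzE by (intro rec_alg1) auto
      define X2 where "X2 = (2*l-1)*(2*l)*(c+2*l+mm-1)/(16*(mm+1)*(2*l+c-2)*(2*l+c-1))"
      define X3 where "X3 = 16*mm*(c+2*l)*(c+2*l+1)/((2*l+1)*(2*l+2)*(c+2*l+mm))"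
      have gg: "Gf c p L = g" by (simp add: g_def pm)
      have L0: "L \<noteq> 0" using Suc by simp
      have "(if L = 0 then 0 else Gf c p (L-1)) + betaf c (of_nat L) * Gf c p L + gammaf c (of_nat L) * Gf c p (L+1)
          = g * X2 + betaf c l * g + gammaf c l * (g * X3)"
        unfolding h2 h3 gg l_def[symmetric] X2_def X3_def using L0 by simp
      also have "\<dots> = g * (X2 + betaf c l + gammaf c l * X3)" by (simp add: algebra_simps)
      also have "\<dots> = Gf c (p+1) L" unfolding h1 ra X2_def X3_def by simp
      finally show ?thesis by simp
    qed
  qed
qed

definition Wf :: "complex \<Rightarrow> nat \<Rightarrow> complex" where
  "Wf a L = 2^(4*L) / 2 * (2*a-1) * (pochhammer a (2*L))^2 * pochhammer (2*a-1) (2*L) * (pochhammer (1/2) L)^2 * (fact L)^2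
     / (fact (2*L) * (2 * of_nat L + a - 1/2) * (pochhammer (2*a-1) (4*L))^2)"

definition Mf :: "complex \<Rightarrow> nat \<Rightarrow> complex" where
  "Mf a n = pochhammer (1/2) n / (4^n * pochhammer (a + 1/2) n)"

lemma Wf_0: assumes "2*a - 1 \<noteq> (0::complex)" shows "Wf a 0 = 1"
  using assms unfolding Wf_def by (simp add: field_simps)

lemma Wf_mono_rearr:
  fixes E Sg PA PB PH FL F2L PC fa fb fh fl d0 d1 f2 fc :: complex
  assumes "F2L \<noteq> 0" "PC \<noteq> 0" "f2 \<noteq> 0" "d1 \<noteq> 0" "fc \<noteq> 0" "d0 \<noteq> 0"
  shows "(16*E)/2 * Sg * (PA*fa)^2*(PB*fb)*(PH*fh)^2*(fl*FL)^2/((F2L*f2)*d1*(PC*fc)^2)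
     = (16*fa^2*fb*fh^2*fl^2*d0/(f2*d1*fc^2)) * (E/2 * Sg * PA^2*PB*PH^2*FL^2/(F2L*d0*PC^2))"
  using assms by (simp add: field_simps power_mult_distrib)

lemma Wf_ratio_atomic:
  fixes U1 V1 W1 X1 Y1 p1 p2 N1 N2 :: complex
  assumes "U1 \<noteq> 0" "V1 \<noteq> 0" "W1 \<noteq> 0" "X1 \<noteq> 0" "Y1 \<noteq> 0" "p1 \<noteq> 0" "p2 \<noteq> 0"
  shows "16*(V1*X1)^2*(N1*N2)*(p1/2)^2*(p2/2)^2*U1/((p1*p2)*Y1*((2*U1)*(2*V1)*(2*W1)*(2*X1))^2) = p1*p2*N1*N2/(256*Y1*U1*W1^2)"
  using assms by (simp add: field_simps power_mult_distrib power2_eq_square)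

lemma Wf_ratio_alg:
  fixes a l :: complex
  assumes nz: "2*l+a-1/2 \<noteq> 0" "a+2*l \<noteq> 0" "2*l+a+1/2 \<noteq> 0" "a+2*l+1 \<noteq> 0" "2*l+a+3/2 \<noteq> 0" "2*l+1 \<noteq> 0" "2*l+2 \<noteq> 0"
  shows "16*((a+2*l)*(a+2*l+1))^2*((2*a-1+2*l)*(2*a+2*l))*(1/2+l)^2*(l+1)^2*(2*l+a-1/2)
       /(((2*l+1)*(2*l+2))*(2*(l+1)+a-1/2)*((2*a-1+4*l)*(2*a+4*l)*(2*a+1+4*l)*(2*a+2+4*l))^2)
    = gammaf (a+1/2) l"
proof -
  have e1: "2*(l+1)+a-1/2 = 2*l+a+3/2" "2*a-1+4*l = 2*(2*l+a-1/2)" "2*a+4*l = 2*(a+2*l)" "2*a+1+4*l = 2*(2*l+a+1/2)"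
     "2*a+2+4*l = 2*(a+2*l+1)" "1/2+l = (2*l+1)/2"
    by (simp_all add: algebra_simps)
  have e2: "l+1 = (2*l+2)/2" by (simp add: algebra_simps)
  have e3: "2*l+2*(a+1/2)-2 = 2*a-1+2*l" "2*l+2*(a+1/2)-1 = 2*a+2*l" "2*l+(a+1/2)+1 = 2*l+a+3/2" "2*l+(a+1/2)-1 = 2*l+a-1/2"
    by (simp_all add: algebra_simps)
  have e4: "2*l+(a+1/2) = 2*l+a+1/2" by (simp add: algebra_simps)
  have e5: "(2*l+1)*(2*l+2)*(2*a-1+2*l)*(2*a+2*l)/(256*(2*l+a+3/2)*(2*l+a-1/2)*(2*l+a+1/2)^2) = (2*l+1)*(2*l+2)*(2*a-1+2*l)*(2*a+2*l)/(256*(2*l+a+3/2)*(2*l+a-1/2)*(2*l+a+1/2)^2)" ..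
  show ?thesis unfolding gammaf_def e1 unfolding e2 unfolding e3 unfolding e4
    by (rule Wf_ratio_atomic[OF nz])
qed

lemma poch_add2: "pochhammer (x::complex) (n+2) = pochhammer x n * ((x + of_nat n) * (x + of_nat n + 1))"
  by (simp add: pochhammer_product' pochhammer_Suc numeral_2_eq_2 algebra_simps)

lemma poch_add4: "pochhammer (x::complex) (n+4) = pochhammer x n * ((x + of_nat n) * (x + of_nat n + 1) * (x + of_nat n + 2) * (x + of_nat n + 3))"
proof -
  have "pochhammer x (n+4) = pochhammer x (n+2+2)" by (rule arg_cong[where f="pochhammer x"]) simp
  also have "\<dots> = pochhammer x n * ((x + of_nat n) * (x + of_nat n + 1)) * ((x + of_nat (n+2)) * (x + of_nat (n+2) + 1))"
    by (simp only: poch_add2)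
  finally show ?thesis by (simp add: algebra_simps)
qed

lemma Wf_ratio:
  assumes am: "\<And>n::nat. 2*a - 1 + of_nat n \<noteq> (0::complex)"
  shows "Wf a (L+1) = gammaf (a+1/2) (of_nat L) * Wf a L"
proof -
  define l where "l = (of_nat L :: complex)"
  have h: "\<And>n::nat. (2*a - 1 + of_nat n)/2 \<noteq> 0" using am by simp
  have hh: "\<And>x y::complex. x = y \<Longrightarrow> y \<noteq> 0 \<Longrightarrow> x \<noteq> 0" by simp
  have nzs1: "2*l+a-1/2 \<noteq> 0" by (rule hh[OF _ h[of "4*L"]]) (simp add: l_def field_simps)
  have nzs2: "a+2*l \<noteq> 0" by (rule hh[OF _ h[of "4*L+1"]]) (simp add: l_def field_simps)
  have nzs3: "2*l+a+1/2 \<noteq> 0" by (rule hh[OF _ h[of "4*L+2"]]) (simp add: l_def field_simps)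
  have nzs4: "a+2*l+1 \<noteq> 0" by (rule hh[OF _ h[of "4*L+3"]]) (simp add: l_def field_simps)
  have nzs5: "2*l+a+3/2 \<noteq> 0" by (rule hh[OF _ h[of "4*L+4"]]) (simp add: l_def field_simps)
  note nzs = nzs1 nzs2 nzs3 nzs4 nzs5
  have nz12: "2*l+1 \<noteq> 0" "2*l+2 \<noteq> 0" unfolding l_def by (rule of_nat_ne_neg)+
  have fc: "(2*a-1+4*l)*(2*a+4*l)*(2*a+1+4*l)*(2*a+2+4*l) \<noteq> 0"
  proof -
    have "2*a-1+4*l = 2*(2*l+a-1/2)" "2*a+4*l = 2*(a+2*l)" "2*a+1+4*l = 2*(2*l+a+1/2)" "2*a+2+4*l = 2*(a+2*l+1)"
      by (simp_all add: algebra_simps)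
    note eqs = this
    show ?thesis unfolding eqs using nzs by (simp only: mult_eq_0_iff de_Morgan_disj) simp
  qed
  have d1: "2*(l+1)+a-1/2 \<noteq> 0" using nzs(5) by (simp add: algebra_simps)
  have PC: "pochhammer (2*a-1) (4*L) \<noteq> 0" using poch_nz[OF am, of 0 "4*L"] by simp
  have e1: "(2::complex)^(4*(L+1)) = 16 * 2^(4*L)" by (simp add: power_add)
  have e2: "pochhammer a (2*(L+1)) = pochhammer a (2*L) * ((a+2*l)*(a+2*l+1))"
    using poch_add2[of a "2*L"] by (simp add: l_def algebra_simps)
  have e3: "pochhammer (2*a-1) (2*(L+1)) = pochhammer (2*a-1) (2*L) * ((2*a-1+2*l)*(2*a+2*l))"
    using poch_add2[of "2*a-1" "2*L"] by (simp add: l_def algebra_simps)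
  have e4: "pochhammer (1/2::complex) (L+1) = pochhammer (1/2) L * (1/2+l)"
    by (simp add: pochhammer_Suc l_def algebra_simps)
  have e5: "(fact (L+1) :: complex) = (l+1) * fact L" by (simp add: l_def algebra_simps)
  have e6: "(fact (2*(L+1)) :: complex) = fact (2*L) * ((2*l+1)*(2*l+2))"
    using fact2_step[of L] by (simp add: l_def algebra_simps)
  have e7: "2 * of_nat (L+1) + a - 1/2 = 2*(l+1)+a-1/2" by (simp add: l_def)
  have e8: "pochhammer (2*a-1) (4*(L+1)) = pochhammer (2*a-1) (4*L) * ((2*a-1+4*l)*(2*a+4*l)*(2*a+1+4*l)*(2*a+2+4*l))"
    using poch_add4[of "2*a-1" "4*L"] by (simp add: l_def algebra_simps)
  have "Wf a (L+1) = (16 * 2^(4*L))/2 * (2*a-1) * (pochhammer a (2*L) * ((a+2*l)*(a+2*l+1)))^2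
      * (pochhammer (2*a-1) (2*L) * ((2*a-1+2*l)*(2*a+2*l))) * (pochhammer (1/2) L * (1/2+l))^2 * ((l+1) * fact L)^2
      / ((fact (2*L) * ((2*l+1)*(2*l+2))) * (2*(l+1)+a-1/2) * (pochhammer (2*a-1) (4*L) * ((2*a-1+4*l)*(2*a+4*l)*(2*a+1+4*l)*(2*a+2+4*l)))^2)"
    unfolding Wf_def e1 e2 e3 e4 e5 e6 e7 e8 ..
  also have "\<dots> = (16*((a+2*l)*(a+2*l+1))^2*((2*a-1+2*l)*(2*a+2*l))*(1/2+l)^2*(l+1)^2*(2*l+a-1/2)
       /(((2*l+1)*(2*l+2))*(2*(l+1)+a-1/2)*((2*a-1+4*l)*(2*a+4*l)*(2*a+1+4*l)*(2*a+2+4*l))^2))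
      * (2^(4*L) / 2 * (2*a-1) * (pochhammer a (2*L))^2 * pochhammer (2*a-1) (2*L) * (pochhammer (1/2) L)^2 * (fact L)^2
     / (fact (2*L) * (2*l+a-1/2) * (pochhammer (2*a-1) (4*L))^2))"
    by (rule Wf_mono_rearr) (use PC nz12 d1 fc nzs in auto)
  also have "\<dots> = gammaf (a+1/2) l * Wf a L"
    unfolding Wf_ratio_alg[OF nzs nz12] by (simp add: Wf_def l_def)
  finally show ?thesis unfolding l_def .
qed

lemma sym_abstract:
  fixes G :: "nat \<Rightarrow> nat \<Rightarrow> complex" and W be ga :: "nat \<Rightarrow> complex"
  assumes R: "\<And>p L. G (p+1) L = (if L = 0 then 0 else G p (L-1)) + be L * G p L + ga L * G p (L+1)"
    and WR: "\<And>L. W (L+1) = ga L * W L"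
    and Z: "\<And>p L. p < L \<Longrightarrow> G p L = 0"
    and N: "p < K" "q < K"
  shows "(\<Sum>L<Suc K. W L * G (p+1) L * G q L) = (\<Sum>L<Suc K. W L * G p L * G (q+1) L)"
proof -
  define A where "A = (\<lambda>p q. \<Sum>L<K. ga L * W L * (G q (L+1) * G p L + G p (L+1) * G q L))"
  define B where "B = (\<lambda>p q. \<Sum>L<Suc K. W L * be L * G p L * G q L)"
  have T: "(\<Sum>L<Suc K. W L * G (p+1) L * G q L) = A p q + B p q" if "p < K" "q < K" for p q
  proof -
    have "(\<Sum>L<Suc K. W L * G (p+1) L * G q L) =
        (\<Sum>L<Suc K. W L * G q L * (if L = 0 then 0 else G p (L-1))) + B p q + (\<Sum>L<Suc K. W L * ga L * G p (L+1) * G q L)"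
      unfolding R B_def by (simp add: sum.distrib algebra_simps)
    also have "(\<Sum>L<Suc K. W L * G q L * (if L = 0 then 0 else G p (L-1))) = (\<Sum>L<K. ga L * W L * G q (L+1) * G p L)"
      unfolding sum.lessThan_Suc_shift using WR by (simp add: algebra_simps)
    also have "(\<Sum>L<Suc K. W L * ga L * G p (L+1) * G q L) = (\<Sum>L<K. ga L * W L * G p (L+1) * G q L)"
      using Z[of p "K+1"] that by (simp add: algebra_simps)
    finally show ?thesis unfolding A_def by (simp add: sum.distrib algebra_simps)
  qed
  have "(\<Sum>L<Suc K. W L * G p L * G (q+1) L) = (\<Sum>L<Suc K. W L * G (q+1) L * G p L)"
    by (simp add: algebra_simps)
  also have "\<dots> = A q p + B q p" using T N by simp
  also have "\<dots> = A p q + B p q" unfolding A_def B_def by (simp add: algebra_simps)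
  finally show ?thesis using T N by simp
qed

lemma F_abstract:
  fixes G :: "nat \<Rightarrow> nat \<Rightarrow> complex" and W be ga M :: "nat \<Rightarrow> complex"
  assumes R: "\<And>p L. G (p+1) L = (if L = 0 then 0 else G p (L-1)) + be L * G p L + ga L * G p (L+1)"
    and WR: "\<And>L. W (L+1) = ga L * W L"
    and Z: "\<And>p L. p < L \<Longrightarrow> G p L = 0"
    and W0: "W 0 = 1" and G00: "G 0 0 = 1" and base: "\<And>p. G p 0 = M p"
  shows "p < N \<Longrightarrow> (\<Sum>L<N. W L * G p L * G q L) = M (p+q)"
proof (induction q arbitrary: p N)
  case 0
  then obtain N0 where N0: "N = Suc N0" by (cases N) auto
  show ?case unfolding N0 sum.lessThan_Suc_shift using Z[of 0] by (simp add: W0 G00 base[of p])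
next
  case (Suc q)
  define K where "K = N + p + q + 2"
  have ext: "(\<Sum>L<N. W L * G p L * G (q+1) L) = (\<Sum>L<Suc K. W L * G p L * G (q+1) L)"
    by (rule sum.mono_neutral_left) (use Suc.prems Z in \<open>auto simp: K_def\<close>)
  have "(\<Sum>L<Suc K. W L * G p L * G (q+1) L) = (\<Sum>L<Suc K. W L * G (p+1) L * G q L)"
    by (rule sym_abstract[where G=G and W=W and be=be and ga=ga, OF R WR Z, symmetric]) (auto simp: K_def)
  also have "\<dots> = M (p + 1 + q)" by (rule Suc.IH) (simp add: K_def)
  finally show ?case using ext by simp
qed

lemma fact_double: "(fact (2*p) :: complex) = 4^p * pochhammer (1/2) p * fact p"
proof -
  have "pochhammer (2*(1/2::complex)) (2*p) = of_nat (2^(2*p)) * pochhammer (1/2) p * pochhammer (1/2 + 1/2) p"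
    by (rule pochhammer_double)
  then show ?thesis by (simp add: pochhammer_fact power_mult)
qed

lemma am_cn: assumes am: "\<And>n::nat. 2*a - 1 + of_nat n \<noteq> (0::complex)" shows "(a + 1/2) + of_nat n \<noteq> 0"
proof
  assume "(a + 1/2) + of_nat n = 0"
  then have "2*((a + 1/2) + of_nat n) = 0" by simp
  then have "2*a - 1 + of_nat (2*n+2) = 0" by (simp add: algebra_simps)
  with am show False by blast
qed

lemma am_c1: assumes am: "\<And>n::nat. 2*a - 1 + of_nat n \<noteq> (0::complex)" shows "a + 1/2 \<noteq> 1"
proof
  assume h: "a + 1/2 = 1"
  have "2*a - 1 + of_nat 0 = 2*(a + 1/2) - 2" by (simp add: algebra_simps)
  also have "\<dots> = 0" using h by simp
  finally show False using am[of 0] by blast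
qed

lemma Gf_base: assumes am: "\<And>n::nat. 2*a - 1 + of_nat n \<noteq> (0::complex)" shows "Gf (a+1/2) p 0 = Mf a p"
proof -
  have "pochhammer (a+1/2) p \<noteq> 0" using poch_nz[OF am_cn[OF am], of 0 p] by simp
  moreover have "(16::complex)^p = 4^p * 4^p" by (simp add: power_mult_distrib[symmetric])
  ultimately show ?thesis unfolding Gf_def Mf_def fact_double by (simp add: field_simps)
qed

lemma F_main:
  assumes am: "\<And>n::nat. 2*a - 1 + of_nat n \<noteq> (0::complex)" and pN: "p < N"
  shows "(\<Sum>L<N. Wf a L * Gf (a+1/2) p L * Gf (a+1/2) q L) = Mf a (p+q)"
proof (rule F_abstract[where be = "\<lambda>L. betaf (a+1/2) (of_nat L)" and ga = "\<lambda>L. gammaf (a+1/2) (of_nat L)"])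
  show "Gf (a+1/2) (p+1) L = (if L = 0 then 0 else Gf (a+1/2) p (L-1)) + betaf (a+1/2) (of_nat L) * Gf (a+1/2) p L + gammaf (a+1/2) (of_nat L) * Gf (a+1/2) p (L+1)" for p L
    by (rule Gf_rec[OF am_cn[OF am] am_c1[OF am]])
  show "Wf a (L+1) = gammaf (a+1/2) (of_nat L) * Wf a L" for L by (rule Wf_ratio[OF am])
  show "p < L \<Longrightarrow> Gf (a+1/2) p L = 0" for p L by (rule Gf_zero)
  show "Wf a 0 = 1" using am[of 0] by (intro Wf_0) simp
  show "Gf (a+1/2) 0 0 = 1" by (rule Gf_diag)
  show "Gf (a+1/2) p 0 = Mf a p" for p by (rule Gf_base[OF am])
  show "p < N" by (rule pN)
qed

lemma vdm_conv:
  fixes mu nu :: complex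
  assumes pm: "\<And>n. pochhammer (mu+1) n \<noteq> 0" and pn: "\<And>n. pochhammer (nu+1) n \<noteq> 0"
  shows "(\<Sum>p\<le>n. 1 / (fact p * pochhammer (mu+1) p) * (1 / (fact (n-p) * pochhammer (nu+1) (n-p))))
       = pochhammer (mu+nu+ of_nat n+1) n / (fact n * pochhammer (mu+1) n * pochhammer (nu+1) n)"
proof -
  have trm: "1 / (fact p * pochhammer (mu+1) p) * (1 / (fact (n-p) * pochhammer (nu+1) (n-p)))
      = ((nu + of_nat n) gchoose p) * ((mu + of_nat n) gchoose (n-p)) / (pochhammer (mu+1) n * pochhammer (nu+1) n)"
    if "p \<le> n" for p
  proof -
    have g1: "(mu + of_nat n) gchoose (n-p) = pochhammer (mu + 1 + of_nat p) (n-p) / fact (n-p)"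
      unfolding gbinomial_pochhammer' using that by (simp add: of_nat_diff algebra_simps)
    have g2: "(nu + of_nat n) gchoose p = pochhammer (nu + 1 + of_nat (n-p)) p / fact p"
      unfolding gbinomial_pochhammer' using that by (simp add: of_nat_diff algebra_simps)
    have q1: "pochhammer (mu+1) n = pochhammer (mu+1) p * pochhammer (mu + 1 + of_nat p) (n-p)"
      using pochhammer_product[of p n "mu+1"] that by simp
    have q2: "pochhammer (nu+1) n = pochhammer (nu+1) (n-p) * pochhammer (nu + 1 + of_nat (n-p)) p"
      using pochhammer_product[of "n-p" n "nu+1"] that by simp
    show ?thesis unfolding g1 g2 q1 q2 using pm[of p] pn[of "n-p"] q1 q2 pm[of n] pn[of n]
      by (simp add: field_simps)
  qed
  have "(\<Sum>p\<le>n. 1 / (fact p * pochhammer (mu+1) p) * (1 / (fact (n-p) * pochhammer (nu+1) (n-p))))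
      = (\<Sum>p=0..n. ((nu + of_nat n) gchoose p) * ((mu + of_nat n) gchoose (n-p))) / (pochhammer (mu+1) n * pochhammer (nu+1) n)"
    unfolding sum_divide_distrib atMost_atLeast0 by (rule sum.cong[OF refl], rule trm) simp
  also have "(\<Sum>p=0..n. ((nu + of_nat n) gchoose p) * ((mu + of_nat n) gchoose (n-p))) = (nu + of_nat n + (mu + of_nat n)) gchoose n"
    by (rule gbinomial_Vandermonde)
  also have "\<dots> = pochhammer (mu+nu+ of_nat n+1) n / fact n"
    unfolding gbinomial_pochhammer' by (simp add: algebra_simps)
  finally show ?thesis by (simp add: field_simps)
qed

lemma poch_dup_key:
  fixes a s :: complex
  assumes "2*a = s"
  shows "pochhammer (s+1) n * pochhammer (s + of_nat n + 1) n = 4^n * pochhammer (a+1/2) n * pochhammer (a+1) n"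
proof -
  have "pochhammer (s+1) (n+n) = pochhammer (s+1) n * pochhammer (s + 1 + of_nat n) n"
    by (rule pochhammer_product')
  moreover have "pochhammer (2*(a+1/2)) (2*n) = of_nat (2^(2*n)) * pochhammer (a+1/2) n * pochhammer (a+1/2+1/2) n"
    by (rule pochhammer_double)
  moreover have "2*(a+1/2) = s+1" using assms by (simp add: algebra_simps)
  moreover have "(of_nat (2^(2*n)) :: complex) = 4^n" by (simp add: power_mult)
  moreover have "n+n = 2*n" by simp
  ultimately show ?thesis by (simp add: add_ac)
qed

lemma coef_eq:
  fixes mu nu z a :: complex
  assumes a2: "2*a = mu+nu" and am: "\<And>n::nat. 2*a - 1 + of_nat n \<noteq> 0"
    and pm: "\<And>n. pochhammer (mu+1) n \<noteq> 0" and pn: "\<And>n. pochhammer (nu+1) n \<noteq> 0"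
    and ps: "\<And>n. pochhammer (mu+nu+1) n \<noteq> 0"
  shows "z^n * Mf a n * (\<Sum>p\<le>n. 1 / (fact p * pochhammer (mu+1) p) * (1 / (fact (n-p) * pochhammer (nu+1) (n-p))))
     = pochhammer (1/2) n * pochhammer (a+1) n / (pochhammer (mu+1) n * pochhammer (nu+1) n * pochhammer (mu+nu+1) n) * z^n / fact n"
proof -
  have k: "pochhammer (mu+nu+1) n * pochhammer (mu+nu + of_nat n + 1) n = 4^n * pochhammer (a+1/2) n * pochhammer (a+1) n"
    by (rule poch_dup_key) (use a2 in simp)
  have nz: "pochhammer (a+1/2) n \<noteq> 0" using poch_nz[OF am_cn[OF am], of 0 n] by simp
  show ?thesis unfolding vdm_conv[OF pm pn] Mf_def
    using pm[of n] pn[of n] ps[of n] nz k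
    by (simp add: field_simps)
qed

lemma lin_lower:
  fixes c :: complex
  assumes cn: "\<And>n::nat. c + of_nat n \<noteq> 0"
  obtains k where "k > 0" "\<And>n::nat. k * (real n + 1) \<le> norm (c + of_nat n)"
proof -
  define N where "N = nat \<lceil>2 * norm c\<rceil> + 1"
  define m0 where "m0 = Min ((\<lambda>n. norm (c + of_nat n)) ` {..<N})"
  have N0: "N > 0" by (simp add: N_def)
  have fin: "finite ((\<lambda>n. norm (c + of_nat n)) ` {..<N})" by simp
  have ne: "(\<lambda>n. norm (c + of_nat n)) ` {..<N} \<noteq> {}" using N0 by auto
  have m0pos: "m0 > 0" unfolding m0_def using cn by (subst Min_gr_iff[OF fin ne]) auto
  have m0le: "m0 \<le> norm (c + of_nat n)" if "n < N" for n
    unfolding m0_def using that by (intro Min_le[OF fin]) auto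
  define k where "k = min (1/2) (m0 / real N)"
  have kpos: "k > 0" using m0pos N0 by (simp add: k_def)
  have k12: "k \<le> 1/2" unfolding k_def by (rule min.cobounded1)
  have k2: "k \<le> m0 / real N" unfolding k_def by (rule min.cobounded2)
  have "k * (real n + 1) \<le> norm (c + of_nat n)" for n
  proof (cases "n < N")
    case True
    have "k * (real n + 1) \<le> (m0 / real N) * (real n + 1)"
      using k2 by (intro mult_right_mono) auto
    also have "\<dots> \<le> (m0 / real N) * real N"
      using True m0pos N0 by (intro mult_left_mono) auto
    also have "\<dots> = m0" using N0 by simp
    also have "\<dots> \<le> norm (c + of_nat n)" using m0le[OF True] .
    finally show ?thesis .
  next
    case False
    have "real N \<ge> 2 * norm c + 1" unfolding N_def by linarith
    then have nbig: "real n \<ge> 2 * norm c + 1" using False by linarith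
    have "norm (of_nat n :: complex) \<le> norm (c + of_nat n) + norm c"
      using norm_triangle_ineq4[of "c + of_nat n" c] by simp
    then have "real n - norm c \<le> norm (c + of_nat n)" by simp
    moreover have kk: "k * (real n + 1) \<le> (1/2) * (real n + 1)"
      using k12 by (intro mult_right_mono) auto
    ultimately have "(1/2) * (real n + 1) \<le> norm (c + of_nat n)" using nbig by argo
    with kk show ?thesis by (rule order_trans)
  qed
  then show ?thesis using kpos that by blast
qed

lemma poch_lower:
  fixes c :: complex
  assumes kpos: "k > 0" and kb: "\<And>n::nat. k * (real n + 1) \<le> norm (c + of_nat n)"
  shows "k^m * (fact (x0+m) / fact x0) \<le> norm (pochhammer (c + of_nat x0) m)"
proof (induction m)
  case 0
  then show ?case by simp
next
  case (Suc m)
  have "k^(Suc m) * (fact (x0 + Suc m) / fact x0) = (k^m * (fact (x0+m) / fact x0)) * (k * (real (x0+m) + 1))"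
    by (simp add: algebra_simps)
  also have "\<dots> \<le> norm (pochhammer (c + of_nat x0) m) * norm (c + of_nat (x0+m))"
    using Suc.IH kb[of "x0+m"] kpos by (intro mult_mono) auto
  also have "\<dots> = norm (pochhammer (c + of_nat x0) (Suc m))"
    by (simp add: pochhammer_Suc norm_mult add.assoc)
  finally show ?case .
qed

lemma X_bound:
  fixes mu :: complex
  assumes cn: "\<And>n::nat. mu + 1 + of_nat n \<noteq> 0"
  obtains k where "k > 0" "\<And>p. norm (1 / (fact p * pochhammer (mu+1) p)) \<le> (1/k)^p / fact p"
proof -
  obtain k where kpos: "k > 0" and kb: "\<And>n::nat. k * (real n + 1) \<le> norm (mu + 1 + of_nat n)"
    using lin_lower[OF cn] by blast
  have "norm (1 / (fact p * pochhammer (mu+1) p)) \<le> (1/k)^p / fact p" for p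
  proof -
    have lb: "k^p * fact p \<le> norm (pochhammer (mu+1) p)"
      using poch_lower[OF kpos kb, of p 0] by simp
    have pos: "0 < k^p * fact p" using kpos by simp
    have pos2: "0 < norm (pochhammer (mu+1) p)" using lb pos by linarith
    have "norm (1 / (fact p * pochhammer (mu+1) p)) = 1 / (fact p * norm (pochhammer (mu+1) p))"
      by (simp add: norm_divide norm_mult)
    also have "\<dots> \<le> 1 / (fact p * (k^p * fact p))"
      using lb pos pos2 by (intro divide_left_mono mult_left_mono) auto
    also have "\<dots> \<le> 1 / (k^p * fact p)"
      using pos by (intro divide_left_mono) (auto simp: mult_le_cancel_right1)
    also have "\<dots> = (1/k)^p / fact p" by (simp add: power_one_over)
    finally show ?thesis .
  qed
  then show ?thesis using kpos that by blast
qed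

lemma norm_fact_c: "norm (fact n :: complex) = fact n"
  by (metis norm_of_nat of_nat_fact)

lemma G_bound:
  fixes c :: complex
  assumes cn: "\<And>n::nat. c + of_nat n \<noteq> 0"
  obtains R where "R \<ge> 1" "\<And>p L. norm (Gf c p L) \<le> R^p"
proof -
  obtain k where kpos: "k > 0" and kb: "\<And>n::nat. k * (real n + 1) \<le> norm (c + of_nat n)"
    using lin_lower[OF cn] by blast
  define Q where "Q = max 1 (1/(16*k))"
  have Q1: "Q \<ge> 1" by (simp add: Q_def)
  have main: "norm (Gf c p L) \<le> (4*Q)^p" for p L
  proof (cases "L \<le> p")
    case False
    then show ?thesis using Q1 by (simp add: Gf_zero)
  next
    case True
    then obtain m where pm: "p = L + m" using le_Suc_ex by blast
    define P where "P = norm (pochhammer (c + of_nat (2*L)) m)"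
    have lb: "k^m * (fact (2*L+m) / fact (2*L)) \<le> P" unfolding P_def by (rule poch_lower[OF kpos kb])
    have lbpos: "0 < k^m * (fact (2*L+m) / fact (2*L))" using kpos by simp
    have Ppos: "0 < P" using lb lbpos by linarith
    have A: "norm (Gf c p L) = fact (2*(L+m)) / (fact (2*L) * 16^m * P * fact m)"
      unfolding pm Gf_Lm P_def by (simp add: norm_divide norm_mult norm_fact_c norm_power)
    also have "\<dots> \<le> fact (2*(L+m)) / (fact (2*L) * 16^m * (k^m * (fact (2*L+m) / fact (2*L))) * fact m)"
      using lb lbpos kpos Ppos by (intro divide_left_mono mult_right_mono mult_left_mono mult_pos_pos) auto
    also have "\<dots> = (fact (2*(L+m)) / (fact m * fact (2*(L+m) - m))) * (1/(16*k))^m"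
      using kpos by (simp add: field_simps power_mult_distrib power_one_over)
    also have "\<dots> \<le> 4^p * Q^p"
    proof (intro mult_mono)
      have "fact (2*(L+m)) / (fact m * fact (2*(L+m) - m)) = real (2*(L+m) choose m)"
        by (subst binomial_fact) auto
      also have "\<dots> \<le> 2^(2*(L+m))" using binomial_le_pow2 of_nat_le_iff by (metis of_nat_numeral of_nat_power)
      also have "\<dots> = 4^p" unfolding pm power_mult by simp
      finally show "fact (2*(L+m)) / (fact m * fact (2*(L+m) - m)) \<le> (4::real)^p" .
      have "(1/(16*k))^m \<le> Q^m" using kpos by (intro power_mono) (auto simp: Q_def)
      also have "\<dots> \<le> Q^p" using Q1 by (intro power_increasing) (auto simp: pm)
      finally show "(1/(16*k))^m \<le> Q^p" .
    qed (use kpos in auto)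
    also have "\<dots> = (4*Q)^p" by (simp add: power_mult_distrib)
    finally show ?thesis .
  qed
  show ?thesis using that[of "4*Q"] Q1 main by auto
qed

lemma gamma_bound:
  fixes c :: complex
  assumes cm: "\<And>n::nat. (c - 1) + of_nat n \<noteq> 0"
  obtains G0 where "G0 \<ge> 1" "\<And>L. norm (gammaf c (of_nat L)) \<le> G0"
proof -
  obtain k where kpos: "k > 0" and kb: "\<And>n::nat. k * (real n + 1) \<le> norm ((c - 1) + of_nat n)"
    using lin_lower[OF cm] by blast
  define A1 where "A1 = 2 + norm (2*c-2)"
  define A2 where "A2 = 2 + norm (2*c-1)"
  have A1p: "A1 \<ge> 0" "A2 \<ge> 0" by (simp_all add: A1_def A2_def)
  define G0 where "G0 = max 1 (4*A1*A2/(256*k^4))"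
  have bnd: "norm (gammaf c (of_nat L)) \<le> 4*A1*A2/(256*k^4)" for L
  proof -
    define r where "r = real L + 1"
    define l where "l = (of_nat L :: complex)"
    have rpos: "r \<ge> 1" by (simp add: r_def)
    have n1: "norm (2*l+1) \<le> 2*r"
    proof -
      have "2*l+1 = of_nat (2*L+1)" by (simp add: l_def)
      then show ?thesis by (simp only: norm_of_nat) (simp add: r_def)
    qed
    have n2: "norm (2*l+2) \<le> 2*r"
    proof -
      have "2*l+2 = of_nat (2*L+2)" by (simp add: l_def)
      then show ?thesis by (simp only: norm_of_nat) (simp add: r_def)
    qed
    have gen: "norm (2*l + w) \<le> (2 + norm w) * r" for w :: complex
    proof -
      have "norm (2*l + w) \<le> norm (2*l) + norm w" by (rule norm_triangle_ineq)
      also have "norm (2*l) = 2 * real L" by (simp add: l_def norm_mult)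
      also have "2 * real L + norm w \<le> 2*r + norm w * r"
      proof -
        have "norm w \<le> norm w * r" using rpos by (simp add: mult_le_cancel_left1)
        moreover have "real L \<le> r" by (simp add: r_def)
        ultimately show ?thesis by argo
      qed
      finally show ?thesis by (simp add: algebra_simps)
    qed
    have n3: "norm (2*l+2*c-2) \<le> A1 * r" using gen[of "2*c-2"] by (simp add: A1_def algebra_simps)
    have n4: "norm (2*l+2*c-1) \<le> A2 * r" using gen[of "2*c-1"] by (simp add: A2_def algebra_simps)
    have dgen: "k * r \<le> norm ((c - 1) + of_nat (2*L + j))" for j
    proof -
      have "k * r \<le> k * (real (2*L+j) + 1)" using kpos by (intro mult_left_mono) (auto simp: r_def)
      also have "\<dots> \<le> norm ((c - 1) + of_nat (2*L + j))" by (rule kb)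
      finally show ?thesis .
    qed
    have d1: "k * r \<le> norm (2*l+c+1)" using dgen[of 2] by (simp add: l_def algebra_simps)
    have d2: "k * r \<le> norm (2*l+c-1)" using dgen[of 0] by (simp add: l_def algebra_simps)
    have d3: "k * r \<le> norm (2*l+c)" using dgen[of 1] by (simp add: l_def algebra_simps)
    have krpos: "0 < k * r" using kpos rpos by simp
    have "norm (gammaf c l) = (norm (2*l+1) * norm (2*l+2) * norm (2*l+2*c-2) * norm (2*l+2*c-1))
        / (256 * norm (2*l+c+1) * norm (2*l+c-1) * norm (2*l+c)^2)"
      unfolding gammaf_def by (simp only: norm_divide norm_mult norm_power norm_numeral)
    also have "\<dots> \<le> (2*r * (2*r) * (A1*r) * (A2*r)) / (256 * (k*r) * (k*r) * (k*r)^2)"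
    proof (rule frac_le)
      show "0 \<le> 2*r * (2*r) * (A1*r) * (A2*r)" using rpos A1p by simp
      show "norm (2*l+1) * norm (2*l+2) * norm (2*l+2*c-2) * norm (2*l+2*c-1) \<le> 2*r * (2*r) * (A1*r) * (A2*r)"
        using n1 n2 n3 n4 rpos A1p by (intro mult_mono) auto
      show "0 < 256 * (k*r) * (k*r) * (k*r)^2" using kpos rpos by (intro mult_pos_pos) auto
      show "256 * (k*r) * (k*r) * (k*r)^2 \<le> 256 * norm (2*l+c+1) * norm (2*l+c-1) * norm (2*l+c)^2"
        using d1 d2 d3 krpos by (intro mult_mono power_mono) auto
    qed
    also have "\<dots> = 4*A1*A2/(256*k^4)" using kpos rpos by (simp add: field_simps power2_eq_square power4_eq_xxxx)
    finally show ?thesis unfolding l_def .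
  qed
  show ?thesis by (rule that[of G0]) (auto simp: G0_def intro: order.trans[OF bnd])
qed

lemma W_bound:
  assumes am: "\<And>n::nat. 2*a - 1 + of_nat n \<noteq> (0::complex)"
  obtains R where "R \<ge> 1" "\<And>L. norm (Wf a L) \<le> R^L"
proof -
  have cm: "(a + 1/2 - 1) + of_nat n \<noteq> 0" for n :: nat
  proof
    assume "(a + 1/2 - 1) + of_nat n = 0"
    then have "2*((a + 1/2 - 1) + of_nat n) = 0" by simp
    then have "2*a - 1 + of_nat (2*n) = 0" by (simp add: algebra_simps)
    with am show False by blast
  qed
  obtain G0 where G1: "G0 \<ge> 1" and Gb: "\<And>L. norm (gammaf (a+1/2) (of_nat L)) \<le> G0"
    using gamma_bound[OF cm] by blast
  have "norm (Wf a L) \<le> G0^L" for L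
  proof (induction L)
    case 0
    then show ?case using Wf_0[of a] am[of 0] by simp
  next
    case (Suc L)
    have "norm (Wf a (Suc L)) = norm (gammaf (a+1/2) (of_nat L)) * norm (Wf a L)"
      using Wf_ratio[OF am, of L] by (simp add: norm_mult)
    also have "\<dots> \<le> G0 * G0^L" using Gb Suc.IH G1 by (intro mult_mono) auto
    finally show ?case by simp
  qed
  then show ?thesis using that G1 by blast
qed

lemma summand_atoms:
  fixes E1 E2 s1 Gm Gn Gs Gh Pm Pn Ph PA PS2 PT F2L d zL fL H1 H2 :: complex
  assumes nz: "Gm \<noteq> 0" "Gn \<noteq> 0" "Gs \<noteq> 0" "Gh \<noteq> 0" "Pm \<noteq> 0" "Pn \<noteq> 0" "Ph \<noteq> 0" "F2L \<noteq> 0" "d \<noteq> 0"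
     "PS2 \<noteq> 0" "PT \<noteq> 0" "fL \<noteq> 0"
  shows "E1 * s1 * Gm * Gn / (Gh^2 * Gs) * (zL*zL * E2 * PA^2 * (Gs*PS2) / (F2L * (Gm*Pm/(Gh*Ph)) * (Gn*Pn/(Gh*Ph)) * d * PS2^2 * PT^2) * H1 * H2)
   = (E1*E2) * s1 * PA^2 * PS2 * Ph^2 * fL^2 / (F2L * d * (PS2*PT)^2) * (zL/(fL*Pm)*H1) * (zL/(fL*Pn)*H2)"
  using nz by (simp add: field_simps power2_eq_square)

lemma not_nonpos_int:
  fixes x :: complex
  assumes "\<And>n::nat. x + of_nat n \<noteq> 0"
  shows "x \<notin> \<int>\<^sub>\<le>\<^sub>0"
proof
  assume "x \<in> \<int>\<^sub>\<le>\<^sub>0"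
  then obtain n :: nat where "x = - of_nat n" by (elim nonpos_Ints_cases')
  then have "x + of_nat n = 0" by simp
  with assms show False by blast
qed

lemma Gamma_poch: "x \<notin> \<int>\<^sub>\<le>\<^sub>0 \<Longrightarrow> Gamma (x + of_nat n) = Gamma x * pochhammer x n"
  using pochhammer_Gamma[of x n] Gamma_nonzero[of x] by (simp add: field_simps)

lemma summand_eq:
  fixes k mu nu H1 H2 :: complex and L :: nat
  assumes m1: "\<And>n::nat. mu + 1 + of_nat n \<noteq> 0" and n1: "\<And>n::nat. nu + 1 + of_nat n \<noteq> 0"
    and s1: "\<And>n::nat. mu + nu - 1 + of_nat n \<noteq> 0"
  shows "(2 powr (2 * (mu + nu) - 3) * (mu + nu - 1) * Gamma (mu + 1) * Gamma (nu + 1)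
        / (of_real pi * Gamma (mu + nu - 1)))
      * ((-1) ^ (2 * L) * k ^ (4 * L) * 2 powr (4 * of_nat L - 2 * mu - 2 * nu + 2)
          * (pochhammer (mu / 2 + nu / 2) (2 * L))\<^sup>2 * Gamma (2 * of_nat L + mu + nu - 1)
         / (fact (2 * L) * gen_poch (of_nat L + 1 / 2) (mu + 1 / 2)
            * gen_poch (of_nat L + 1 / 2) (nu + 1 / 2)
            * (2 * of_nat L + mu / 2 + nu / 2 - 1 / 2)
            * (pochhammer (mu + nu - 1) (2 * L))\<^sup>2
            * (pochhammer (2 * of_nat L + mu + nu - 1) (2 * L))\<^sup>2)
         * H1 * H2)
     = Wf (mu/2 + nu/2) L * ((-(k^2))^L / (fact L * pochhammer (mu+1) L) * H1) * ((-(k^2))^L / (fact L * pochhammer (nu+1) L) * H2)"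
proof -
  define Gm where "Gm = Gamma (mu+1)"
  define Gn where "Gn = Gamma (nu+1)"
  define Gs where "Gs = Gamma (mu+nu-1)"
  define Gh where "Gh = Gamma (1/2 :: complex)"
  define Pm where "Pm = pochhammer (mu+1) L"
  define Pn where "Pn = pochhammer (nu+1) L"
  define Ph where "Ph = pochhammer (1/2 :: complex) L"
  define PA where "PA = pochhammer (mu/2+nu/2) (2*L)"
  define PS2 where "PS2 = pochhammer (mu+nu-1) (2*L)"
  define PT where "PT = pochhammer (2 * of_nat L + mu + nu - 1) (2*L)"
  define E1 where "E1 = (2::complex) powr (2 * (mu + nu) - 3)"
  define E2 where "E2 = (2::complex) powr (4 * of_nat L - 2 * mu - 2 * nu + 2)"
  define zL where "zL = (-(k^2))^L"
  define dd where "dd = 2 * of_nat L + mu / 2 + nu / 2 - 1 / 2"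
  have mi: "mu + 1 \<notin> \<int>\<^sub>\<le>\<^sub>0" by (rule not_nonpos_int) (use m1 in auto)
  have ni: "nu + 1 \<notin> \<int>\<^sub>\<le>\<^sub>0" by (rule not_nonpos_int) (use n1 in auto)
  have si: "mu + nu - 1 \<notin> \<int>\<^sub>\<le>\<^sub>0" by (rule not_nonpos_int) (use s1 in auto)
  have hi: "(1/2::complex) \<notin> \<int>\<^sub>\<le>\<^sub>0"
  proof (rule not_nonpos_int)
    fix n :: nat
    have "(1/2::complex) + of_nat n = of_real (1/2 + real n)" by simp
    moreover have "1/2 + real n \<noteq> 0" by linarith
    ultimately show "(1/2::complex) + of_nat n \<noteq> 0" by (metis of_real_eq_0_iff)
  qed
  have e1: "gen_poch (of_nat L + 1 / 2) (mu + 1 / 2) = Gm * Pm / (Gh * Ph)"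
  proof -
    have a1: "Gamma (of_nat L + 1 / 2 + (mu + 1 / 2)) = Gamma ((mu + 1) + of_nat L)" by (rule arg_cong[where f=Gamma]) (simp add: algebra_simps)
    have a2: "Gamma (of_nat L + 1 / 2) = Gamma ((1/2::complex) + of_nat L)" by (rule arg_cong[where f=Gamma]) (simp add: algebra_simps)
    show ?thesis unfolding gen_poch_def a1 a2 Gamma_poch[OF mi, of L] Gamma_poch[OF hi, of L] Gm_def Pm_def Gh_def Ph_def ..
  qed
  have e2: "gen_poch (of_nat L + 1 / 2) (nu + 1 / 2) = Gn * Pn / (Gh * Ph)"
  proof -
    have a1: "Gamma (of_nat L + 1 / 2 + (nu + 1 / 2)) = Gamma ((nu + 1) + of_nat L)" by (rule arg_cong[where f=Gamma]) (simp add: algebra_simps)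
    have a2: "Gamma (of_nat L + 1 / 2) = Gamma ((1/2::complex) + of_nat L)" by (rule arg_cong[where f=Gamma]) (simp add: algebra_simps)
    show ?thesis unfolding gen_poch_def a1 a2 Gamma_poch[OF ni, of L] Gamma_poch[OF hi, of L] Gn_def Pn_def Gh_def Ph_def ..
  qed
  have e3: "Gamma (2 * of_nat L + mu + nu - 1) = Gs * PS2"
  proof -
    have a1: "Gamma (2 * of_nat L + mu + nu - 1) = Gamma ((mu + nu - 1) + of_nat (2*L))" by (rule arg_cong[where f=Gamma]) (simp add: algebra_simps)
    show ?thesis unfolding a1 Gs_def PS2_def by (rule Gamma_poch[OF si])
  qed
  have e4: "E1 * E2 = 2^(4*L) / 2"
  proof -
    have "E1 * E2 = (2::complex) powr (2 * (mu + nu) - 3 + (4 * of_nat L - 2 * mu - 2 * nu + 2))"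
      unfolding E1_def E2_def by (rule powr_add[symmetric])
    also have "2 * (mu + nu) - 3 + (4 * of_nat L - 2 * mu - 2 * nu + 2) = of_nat (4*L) - 1"
      by (simp add: algebra_simps)
    also have "(2::complex) powr (of_nat (4*L) - 1) = 2^(4*L) / 2"
    proof -
      have "(2::complex) powr (of_nat (4*L) - 1) * 2 powr 1 = 2 powr ((of_nat (4*L) - 1) + 1)"
        by (rule powr_add[symmetric])
      also have "(of_nat (4*L) - 1) + 1 = (of_nat (4*L) :: complex)" by simp
      finally have "(2::complex) powr (of_nat (4*L) - 1) * 2 powr 1 = 2 powr (of_nat (4*L))" .
      moreover have "(2::complex) powr 1 = 2" using powr_nat[of 2 1] by simp
      ultimately show ?thesis by (simp add: powr_nat field_simps del: of_nat_mult)
    qed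
    finally show ?thesis .
  qed
  have e5: "(of_real pi :: complex) = Gh^2"
    unfolding Gh_def Gamma_one_half_complex by (simp flip: of_real_power)
  have e6: "(-1) ^ (2 * L) * k ^ (4 * L) = zL * zL"
    unfolding zL_def by (simp add: power_mult_distrib power_mult[symmetric] power_add[symmetric] mult_2 algebra_simps)
  have e7: "pochhammer (mu + nu - 1) (4*L) = PS2 * PT"
  proof -
    have a0: "pochhammer (mu + nu - 1) (4*L) = pochhammer (mu + nu - 1) (2*L + 2*L)"
      by (rule arg_cong[where f="pochhammer (mu + nu - 1)"]) simp
    have a1: "pochhammer (mu + nu - 1 + of_nat (2*L)) (2*L) = PT" unfolding PT_def
      by (rule arg_cong[where f="\<lambda>x. pochhammer x (2*L)"]) (simp add: algebra_simps)
    show ?thesis unfolding a0 pochhammer_product' a1 PS2_def ..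
  qed
  have e8: "2 * (mu/2 + nu/2) - 1 = mu + nu - 1" by (simp add: algebra_simps)
  have e9: "2 * of_nat L + (mu/2 + nu/2) - 1/2 = dd" by (simp add: dd_def algebra_simps)
  have nzs: "Gm \<noteq> 0" "Gn \<noteq> 0" "Gs \<noteq> 0" "Gh \<noteq> 0" "Pm \<noteq> 0" "Pn \<noteq> 0" "Ph \<noteq> 0" "(fact (2*L)::complex) \<noteq> 0" "dd \<noteq> 0"
     "PS2 \<noteq> 0" "PT \<noteq> 0" "(fact L::complex) \<noteq> 0"
  proof -
    show "Gm \<noteq> 0" unfolding Gm_def by (rule Gamma_nonzero[OF mi])
    show "Gn \<noteq> 0" unfolding Gn_def by (rule Gamma_nonzero[OF ni])
    show "Gs \<noteq> 0" unfolding Gs_def by (rule Gamma_nonzero[OF si])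
    show "Gh \<noteq> 0" unfolding Gh_def by (rule Gamma_nonzero[OF hi])
    show "Pm \<noteq> 0" unfolding Pm_def using poch_nz[OF m1, of 0 L] by simp
    show "Pn \<noteq> 0" unfolding Pn_def using poch_nz[OF n1, of 0 L] by simp
    show "Ph \<noteq> 0" unfolding Ph_def using hi pochhammer_eq_0_imp_nonpos_Int by blast
    show "(fact (2*L)::complex) \<noteq> 0" by simp
    show "dd \<noteq> 0"
    proof
      assume "dd = 0"
      then have "2 * dd = 0" by simp
      then have "mu + nu - 1 + of_nat (4*L) = 0" unfolding dd_def by (simp add: algebra_simps)
      with s1 show False by blast
    qed
    show "PS2 \<noteq> 0" unfolding PS2_def using poch_nz[OF s1, of 0 "2*L"] by simp
    show "PT \<noteq> 0" unfolding PT_def using poch_nz[OF s1, of "2*L" "2*L"] by (simp add: algebra_simps)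
    show "(fact L::complex) \<noteq> 0" by simp
  qed
  have "Wf (mu/2 + nu/2) L = (E1*E2) * (mu+nu-1) * PA^2 * PS2 * Ph^2 * (fact L)^2 / (fact (2*L) * dd * (PS2*PT)^2)"
    unfolding Wf_def e8 e9 e7 e4[symmetric] PA_def[symmetric] PS2_def[symmetric] Ph_def[symmetric] ..
  then show ?thesis
    unfolding e1 e2 e3 e5 e6 E1_def[symmetric] E2_def[symmetric] Gm_def[symmetric] Gn_def[symmetric] Gs_def[symmetric]
      PA_def[symmetric] PS2_def[symmetric] PT_def[symmetric] dd_def[symmetric] zL_def[symmetric] Pm_def[symmetric] Pn_def[symmetric]
    using summand_atoms[OF nzs] by simp
qed

lemma prod_has_sum_nonneg:
  fixes f :: "'a \<Rightarrow> real" and g :: "'b \<Rightarrow> real"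
  assumes fa: "(f has_sum a) A" and gb: "(g has_sum b) B" and f0: "\<And>x. f x \<ge> 0" and g0: "\<And>y. g y \<ge> 0"
  shows "((\<lambda>(x,y). f x * g y) has_sum a * b) (A \<times> B)"
proof -
  have inner: "((\<lambda>y. (\<lambda>(x,y). f x * g y) (x, y)) has_sum f x * b) B" for x
    using has_sum_cmult_right[OF gb, of "f x"] by simp
  have outer: "((\<lambda>x. f x * b) has_sum a * b) A" by (rule has_sum_cmult_left[OF fa])
  have summ: "(\<lambda>(x,y). f x * g y) summable_on Sigma A (\<lambda>_. B)"
    by (rule summable_on_SigmaI[where g="\<lambda>x. f x * b"]) (use inner outer f0 g0 in \<open>auto intro: has_sum_imp_summable\<close>)
  show ?thesis by (rule has_sum_SigmaI[OF _ outer summ]) (use inner in auto)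
qed

lemma exp_has_sum: "((\<lambda>p. r^p / fact p) has_sum exp r) UNIV" if "r \<ge> 0" for r :: real
proof -
  have "(\<lambda>p. r^p / fact p) sums exp r" using exp_converges[of r] by (simp add: divide_inverse mult.commute)
  then show ?thesis using that by (intro sums_nonneg_imp_has_sum) auto
qed

lemma geom_has_sum: "((\<lambda>L. (1/2::real)^L) has_sum 2) UNIV"
proof -
  have "(\<lambda>L. (1/2::real)^L) sums (1 / (1 - 1/2))" by (rule geometric_sums) simp
  then show ?thesis by (intro sums_nonneg_imp_has_sum) auto
qed

lemma u_shift:
  fixes m c z :: complex
  assumes cn: "\<And>n::nat. c + of_nat n \<noteq> 0" and mn: "\<And>n::nat. m + 1 + of_nat n \<noteq> 0"
  shows "Gf c (i+L) L * (1 / (fact (i+L) * pochhammer (m+1) (i+L))) * z^(i+L)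
    = z^L / (fact L * pochhammer (m+1) L) * (pochhammer (of_nat L + 1/2) i / (pochhammer (of_nat L + m + 1) i * pochhammer (c + of_nat (2*L)) i) * (z/4)^i / fact i)"
proof -
  define PH where "PH = pochhammer (1/2::complex) L"
  define PHi where "PHi = pochhammer (of_nat L + 1/2 :: complex) i"
  define PM where "PM = pochhammer (m+1) L"
  define PMi where "PMi = pochhammer (of_nat L + m + 1) i"
  define PC where "PC = pochhammer (c + of_nat (2*L)) i"
  have g: "Gf c (i+L) L = fact (2*(L+i)) / (fact (2*L) * 16^i * PC * fact i)"
    using Gf_Lm[of c L i] by (simp add: PC_def add.commute)
  have f1: "(fact (2*(L+i)) :: complex) = 4^L * 4^i * (PH * PHi) * fact (L+i)"
  proof -
    have "pochhammer (1/2::complex) (L+i) = PH * pochhammer (1/2 + of_nat L) i"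
      unfolding PH_def by (rule pochhammer_product')
    moreover have "pochhammer (1/2 + of_nat L :: complex) i = PHi"
      unfolding PHi_def by (rule arg_cong[where f="\<lambda>x. pochhammer x i"]) (simp add: add.commute)
    ultimately show ?thesis using fact_double[of "L+i"] by (simp add: power_add)
  qed
  have f2: "(fact (2*L) :: complex) = 4^L * PH * fact L" using fact_double[of L] by (simp add: PH_def)
  have p1: "pochhammer (m+1) (i+L) = PM * PMi"
  proof -
    have "pochhammer (m+1) (L+i) = PM * pochhammer (m + 1 + of_nat L) i"
      unfolding PM_def by (rule pochhammer_product')
    moreover have "pochhammer (m + 1 + of_nat L) i = PMi"
      unfolding PMi_def by (rule arg_cong[where f="\<lambda>x. pochhammer x i"]) (simp add: add_ac)
    ultimately show ?thesis by (simp add: add.commute)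
  qed
  have nz: "PH \<noteq> 0" "PHi \<noteq> 0" "PM \<noteq> 0" "PMi \<noteq> 0" "PC \<noteq> 0"
  proof -
    have hn: "(1/2::complex) + of_nat n \<noteq> 0" for n :: nat
    proof -
      have "(1/2::complex) + of_nat n = of_real (1/2 + real n)" by simp
      moreover have "1/2 + real n \<noteq> 0" by linarith
      ultimately show ?thesis by (metis of_real_eq_0_iff)
    qed
    show "PH \<noteq> 0" unfolding PH_def using poch_nz[of "1/2" 0 L] hn by simp
    show "PHi \<noteq> 0" unfolding PHi_def using poch_nz[of "1/2" L i] hn by (simp add: add.commute)
    show "PM \<noteq> 0" unfolding PM_def using poch_nz[OF mn, of 0 L] by simp
    show "PMi \<noteq> 0" unfolding PMi_def using poch_nz[OF mn, of L i] by (simp add: add_ac)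
    show "PC \<noteq> 0" unfolding PC_def by (rule poch_nz[OF cn])
  qed
  have e16: "(16::complex)^i = 4^i * 4^i" by (simp add: power_mult_distrib[symmetric])
  show ?thesis unfolding g f1 f2 p1 PHi_def[symmetric] PMi_def[symmetric] PC_def[symmetric] PM_def[symmetric] e16
    using nz by (simp add: field_simps power_add power_divide)
qed

theorem mainTheorem9:
  fixes k \<mu> \<nu> :: complex
  assumes "\<And>n::nat. \<mu> \<noteq> - of_nat (Suc n)"
    and "\<And>n::nat. \<nu> \<noteq> - of_nat (Suc n)"
    and "\<And>n::nat. \<mu> + \<nu> \<noteq> 1 - of_nat n"
  shows "(\<lambda>L::nat.
      (2 powr (2 * (\<mu> + \<nu>) - 3) * (\<mu> + \<nu> - 1) * Gamma (\<mu> + 1) * Gamma (\<nu> + 1)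
        / (of_real pi * Gamma (\<mu> + \<nu> - 1)))
      * ((-1) ^ (2 * L) * k ^ (4 * L) * 2 powr (4 * of_nat L - 2 * \<mu> - 2 * \<nu> + 2)
          * (pochhammer (\<mu> / 2 + \<nu> / 2) (2 * L))\<^sup>2 * Gamma (2 * of_nat L + \<mu> + \<nu> - 1)
         / (fact (2 * L) * gen_poch (of_nat L + 1 / 2) (\<mu> + 1 / 2)
            * gen_poch (of_nat L + 1 / 2) (\<nu> + 1 / 2)
            * (2 * of_nat L + \<mu> / 2 + \<nu> / 2 - 1 / 2)
            * (pochhammer (\<mu> + \<nu> - 1) (2 * L))\<^sup>2
            * (pochhammer (2 * of_nat L + \<mu> + \<nu> - 1) (2 * L))\<^sup>2)
         * hypergeo [of_nat L + 1 / 2] [of_nat L + \<mu> + 1, 2 * of_nat L + \<mu> / 2 + \<nu> / 2 + 1 / 2] (- k\<^sup>2 / 4)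
         * hypergeo [of_nat L + 1 / 2] [2 * of_nat L + \<mu> / 2 + \<nu> / 2 + 1 / 2, of_nat L + \<nu> + 1] (- k\<^sup>2 / 4)))
    sums hypergeo [1 / 2, \<mu> / 2 + \<nu> / 2 + 1] [\<mu> + 1, \<nu> + 1, \<mu> + \<nu> + 1] (- k\<^sup>2)"
proof -
  define a where "a = \<mu>/2 + \<nu>/2"
  define c where "c = a + 1/2"
  define z where "z = - (k^2)"
  have a2: "2*a = \<mu> + \<nu>" by (simp add: a_def algebra_simps)
  have am: "2*a - 1 + of_nat n \<noteq> 0" for n :: nat
  proof
    assume "2*a - 1 + of_nat n = 0"
    then have "\<mu> + \<nu> = 1 - of_nat n" using a2 by (simp add: algebra_simps)
    with assms(3) show False by blast
  qed
  have m1: "\<mu> + 1 + of_nat n \<noteq> 0" for n :: nat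
  proof
    assume "\<mu> + 1 + of_nat n = 0"
    then have "\<mu> = - of_nat (Suc n)" by (simp add: algebra_simps eq_neg_iff_add_eq_0)
    with assms(1) show False by blast
  qed
  have n1: "\<nu> + 1 + of_nat n \<noteq> 0" for n :: nat
  proof
    assume "\<nu> + 1 + of_nat n = 0"
    then have "\<nu> = - of_nat (Suc n)" by (simp add: algebra_simps eq_neg_iff_add_eq_0)
    with assms(2) show False by blast
  qed
  have s1: "\<mu> + \<nu> - 1 + of_nat n \<noteq> 0" for n :: nat using am[of n] a2 by simp
  have cn: "c + of_nat n \<noteq> 0" for n :: nat unfolding c_def by (rule am_cn[OF am])
  have pm: "pochhammer (\<mu>+1) n \<noteq> 0" for n using poch_nz[OF m1, of 0 n] by simp
  have pn: "pochhammer (\<nu>+1) n \<noteq> 0" for n using poch_nz[OF n1, of 0 n] by simp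
  have ps: "pochhammer (\<mu>+\<nu>+1) n \<noteq> 0" for n
  proof -
    have "\<mu>+\<nu>+1 + of_nat j \<noteq> 0" for j :: nat
    proof
      assume h: "\<mu>+\<nu>+1 + of_nat j = 0"
      have "\<mu> + \<nu> = (\<mu>+\<nu>+1 + of_nat j) - 1 - of_nat j" by simp
      also have "\<dots> = 1 - of_nat (j+2)" unfolding h by simp
      finally have "\<mu> + \<nu> = 1 - of_nat (j+2)" .
      with assms(3) show False by blast
    qed
    then show ?thesis using poch_nz[of "\<mu>+\<nu>+1" 0 n] by simp
  qed
  define X where "X p = 1 / (fact p * pochhammer (\<mu>+1) p)" for p
  define Y where "Y q = 1 / (fact q * pochhammer (\<nu>+1) q)" for q
  define u where "u L p = Gf c p L * X p * z^p" for L p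
  define v where "v L q = Gf c q L * Y q * z^q" for L q
  define g where "g L = (\<lambda>(p,q). Wf a L * u L p * v L q)" for L
  define f where "f = (\<lambda>(L::nat,pq::nat\<times>nat). g L pq)"
  obtain kX where kX: "kX > 0" and bX: "\<And>p. norm (X p) \<le> (1/kX)^p / fact p"
    using X_bound[of \<mu>] m1 unfolding X_def by metis
  obtain kY where kY: "kY > 0" and bY: "\<And>q. norm (Y q) \<le> (1/kY)^q / fact q"
    using X_bound[of \<nu>] n1 unfolding Y_def by metis
  obtain RG where RG: "RG \<ge> 1" and bG: "\<And>p L. norm (Gf c p L) \<le> RG^p"
    using G_bound[OF cn] by blast
  obtain RW where RW: "RW \<ge> 1" and bW: "\<And>L. norm (Wf a L) \<le> RW^L"
    using W_bound[OF am] by blast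
  define r0 where "r0 = RG * norm z / kX"
  define r1 where "r1 = 2 * RW * r0"
  define r2 where "r2 = RG * norm z / kY"
  have r0p: "r0 \<ge> 0" and r1p: "r1 \<ge> 0" and r2p: "r2 \<ge> 0"
    using kX kY RG RW by (simp_all add: r0_def r1_def r2_def)
  have bu: "norm (u L p) \<le> r0^p / fact p" for L p
  proof -
    have "norm (u L p) = norm (Gf c p L) * norm (X p) * norm z ^ p" by (simp add: u_def norm_mult norm_power)
    also have "\<dots> \<le> RG^p * ((1/kX)^p / fact p) * norm z ^ p"
      using bG bX RG kX by (intro mult_mono) auto
    also have "\<dots> = r0^p / fact p" by (simp add: r0_def power_mult_distrib power_divide field_simps)
    finally show ?thesis .
  qed
  have bv: "norm (v L q) \<le> r2^q / fact q" for L q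
  proof -
    have "norm (v L q) = norm (Gf c q L) * norm (Y q) * norm z ^ q" by (simp add: v_def norm_mult norm_power)
    also have "\<dots> \<le> RG^q * ((1/kY)^q / fact q) * norm z ^ q"
      using bG bY RG kY by (intro mult_mono) auto
    also have "\<dots> = r2^q / fact q" by (simp add: r2_def power_mult_distrib power_divide field_simps)
    finally show ?thesis .
  qed
  define B where "B = (\<lambda>(L::nat,(p::nat,q::nat)). (1/2::real)^L * ((r1^p / fact p) * (r2^q / fact q)))"
  have Bhas: "(B has_sum (2 * (exp r1 * exp r2))) (UNIV \<times> (UNIV \<times> UNIV))"
  proof -
    have i1: "((\<lambda>(p,q). r1^p / fact p * (r2^q / fact q)) has_sum (exp r1 * exp r2)) (UNIV \<times> UNIV)"
      by (rule prod_has_sum_nonneg[OF exp_has_sum[OF r1p] exp_has_sum[OF r2p]]) (use r1p r2p in auto)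
    have i2: "((\<lambda>(x,y). (1/2::real)^x * (\<lambda>(p,q). r1^p / fact p * (r2^q / fact q)) y) has_sum (2 * (exp r1 * exp r2))) (UNIV \<times> (UNIV \<times> UNIV))"
      by (rule prod_has_sum_nonneg[OF geom_has_sum i1]) (use r1p r2p in auto)
    have "(\<lambda>(x,y). (1/2::real)^x * (\<lambda>(p,q). r1^p / fact p * (r2^q / fact q)) y) = B"
      by (auto simp: B_def fun_eq_iff)
    with i2 show ?thesis by simp
  qed
  have bf: "norm (f x) \<le> B x" for x
  proof -
    obtain L p q where x: "x = (L,(p,q))" by (cases x) auto
    show ?thesis
    proof (cases "p < L")
      case True
      then have "u L p = 0" by (simp add: u_def Gf_zero)
      then show ?thesis using r1p r2p by (simp add: x f_def g_def B_def)
    next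
      case False
      have "norm (f x) = norm (Wf a L) * norm (u L p) * norm (v L q)" by (simp add: x f_def g_def norm_mult)
      also have "\<dots> \<le> RW^L * (r0^p / fact p) * (r2^q / fact q)"
        using bW bu bv RW r0p by (intro mult_mono) auto
      also have "\<dots> \<le> ((1/2)^L * r1^p / fact p) * (r2^q / fact q)"
      proof (intro mult_right_mono)
        have "(2*RW)^L \<le> (2*RW)^p" using RW False by (intro power_increasing) auto
        then have "(2*RW)^L * r0^p \<le> (2*RW)^p * r0^p" using r0p by (intro mult_right_mono) auto
        then have "RW^L * r0^p \<le> (1/2)^L * r1^p"
          by (simp add: r1_def power_mult_distrib field_simps)
        then show "RW^L * (r0^p / fact p) \<le> (1/2)^L * r1^p / fact p" by (simp add: divide_right_mono)
      qed (use r2p in auto)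
      also have "\<dots> = B x" by (simp add: x B_def)
      finally show ?thesis .
    qed
  qed
  have fsum: "f summable_on (UNIV \<times> (UNIV \<times> UNIV))"
    by (rule abs_summable_summable, rule Infinite_Sum.abs_summable_on_comparison_test'[OF has_sum_imp_summable[OF Bhas]])
      (use bf in auto)
  define S where "S = infsum f (UNIV \<times> (UNIV \<times> UNIV))"
  have fhas: "(f has_sum S) (UNIV \<times> (UNIV \<times> UNIV))" using fsum by (simp add: S_def)
  have gsum: "g L summable_on (UNIV \<times> UNIV)" for L
    using summable_on_SigmaD1[of g UNIV "\<lambda>_. UNIV \<times> UNIV" L] fsum unfolding f_def by simp
  have usum: "u L summable_on UNIV" for L
    by (rule abs_summable_summable, rule Infinite_Sum.abs_summable_on_comparison_test'[OF has_sum_imp_summable[OF exp_has_sum[OF r0p]]])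
      (use bu in auto)
  have vsum: "v L summable_on UNIV" for L
    by (rule abs_summable_summable, rule Infinite_Sum.abs_summable_on_comparison_test'[OF has_sum_imp_summable[OF exp_has_sum[OF r2p]]])
      (use bv in auto)
  define U where "U L = infsum (u L) UNIV" for L
  define V where "V L = infsum (v L) UNIV" for L
  have ginf: "infsum (g L) (UNIV \<times> UNIV) = Wf a L * U L * V L" for L
  proof -
    have "infsum (g L) (UNIV \<times> UNIV) = (\<Sum>\<^sub>\<infinity>(p,q)\<in>UNIV \<times> UNIV. Wf a L * u L p * v L q)" by (simp add: g_def)
    also have "\<dots> = (\<Sum>\<^sub>\<infinity>p\<in>UNIV. infsum (\<lambda>q. Wf a L * u L p * v L q) UNIV)"
      by (rule infsum_Sigma'_banach[symmetric]) (use gsum[of L] in \<open>simp add: g_def\<close>)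
    also have "\<dots> = (\<Sum>\<^sub>\<infinity>p\<in>UNIV. Wf a L * u L p * V L)" by (simp add: infsum_cmult_right' V_def)
    also have "\<dots> = Wf a L * U L * V L" by (simp add: infsum_cmult_left' infsum_cmult_right' U_def)
    finally show ?thesis .
  qed
  have ghas: "((\<lambda>y. f (L, y)) has_sum Wf a L * U L * V L) (UNIV \<times> UNIV)" for L
  proof -
    have "(g L has_sum infsum (g L) (UNIV \<times> UNIV)) (UNIV \<times> UNIV)" using gsum[of L] by simp
    then show ?thesis unfolding ginf by (simp add: f_def)
  qed
  have Lhas: "((\<lambda>L. Wf a L * U L * V L) has_sum S) UNIV"
    by (rule has_sum_Sigma'[OF fhas]) (use ghas in auto)
  have shift_gen: "U' = C * suminf h"
    if us: "w sums U'" and z0: "\<And>p. p < L \<Longrightarrow> w p = 0" and tm: "\<And>i. w (i + L) = C * h i"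
    for w :: "nat \<Rightarrow> complex" and U' C h and L :: nat
  proof -
    have "sum w {..<L} = 0" using z0 by simp
    then have "(\<lambda>i. w (i + L)) sums U'" using sums_iff_shift[of w L U'] us by simp
    then have hs: "(\<lambda>i. C * h i) sums U'" using tm by simp
    show ?thesis
    proof (cases "C = 0")
      case True
      then have "(\<lambda>i. 0) sums U'" using hs by simp
      then have "U' = 0" using sums_zero sums_unique2 by blast
      then show ?thesis using True by simp
    next
      case False
      have "(\<lambda>i. (1/C) * (C * h i)) sums ((1/C) * U')" by (rule sums_mult[OF hs])
      then have "h sums (U' / C)" using False by simp
      then have "suminf h = U' / C" by (rule sums_unique[symmetric])
      then show ?thesis using False by simp
    qed
  qed
  have c2L: "c + of_nat (2*L) = 2 * of_nat L + \<mu> / 2 + \<nu> / 2 + 1 / 2" for L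
    by (simp add: c_def a_def algebra_simps)
  have z4: "z / 4 = - k\<^sup>2 / 4" by (simp add: z_def)
  have Ueq: "U L = (-(k^2))^L / (fact L * pochhammer (\<mu>+1) L) * hypergeo [of_nat L + 1 / 2] [of_nat L + \<mu> + 1, 2 * of_nat L + \<mu> / 2 + \<nu> / 2 + 1 / 2] (- k\<^sup>2 / 4)" for L
  proof -
    have us: "u L sums U L" using usum[of L] unfolding U_def by (intro has_sum_imp_sums) simp
    show ?thesis unfolding hypergeo_def
    proof (rule shift_gen[OF us])
      show "u L p = 0" if "p < L" for p using that by (simp add: u_def Gf_zero)
      show "u L (i + L) = (-(k^2))^L / (fact L * pochhammer (\<mu>+1) L) *
         ((\<Prod>a\<leftarrow>[of_nat L + 1 / 2]. pochhammer a i) / (\<Prod>b\<leftarrow>[of_nat L + \<mu> + 1, 2 * of_nat L + \<mu> / 2 + \<nu> / 2 + 1 / 2]. pochhammer b i) * (- k\<^sup>2 / 4) ^ i / fact i)" for i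
        using u_shift[OF cn m1, of i L z] unfolding u_def X_def c2L z4 by (simp add: z_def)
    qed
  qed
  have Veq: "V L = (-(k^2))^L / (fact L * pochhammer (\<nu>+1) L) * hypergeo [of_nat L + 1 / 2] [2 * of_nat L + \<mu> / 2 + \<nu> / 2 + 1 / 2, of_nat L + \<nu> + 1] (- k\<^sup>2 / 4)" for L
  proof -
    have vs: "v L sums V L" using vsum[of L] unfolding V_def by (intro has_sum_imp_sums) simp
    show ?thesis unfolding hypergeo_def
    proof (rule shift_gen[OF vs])
      show "v L p = 0" if "p < L" for p using that by (simp add: v_def Gf_zero)
      show "v L (i + L) = (-(k^2))^L / (fact L * pochhammer (\<nu>+1) L) *
         ((\<Prod>a\<leftarrow>[of_nat L + 1 / 2]. pochhammer a i) / (\<Prod>b\<leftarrow>[2 * of_nat L + \<mu> / 2 + \<nu> / 2 + 1 / 2, of_nat L + \<nu> + 1]. pochhammer b i) * (- k\<^sup>2 / 4) ^ i / fact i)" for i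
        using u_shift[OF cn n1, of i L z] unfolding v_def Y_def c2L z4 by (simp add: z_def mult.commute)
    qed
  qed
  define coef where "coef n = (\<Prod>a\<leftarrow>[1 / 2, \<mu> / 2 + \<nu> / 2 + 1]. pochhammer a n) / (\<Prod>b\<leftarrow>[\<mu> + 1, \<nu> + 1, \<mu> + \<nu> + 1]. pochhammer b n) * (- k\<^sup>2) ^ n / fact n" for n
  define T where "T = Sigma (UNIV::nat set) (\<lambda>n. {..n} \<times> (UNIV::nat set))"
  define h where "h = (\<lambda>(n::nat,(p::nat,L::nat)). f (L,(p,n-p)))"
  have "(f has_sum S) (UNIV \<times> (UNIV \<times> UNIV)) = (h has_sum S) T"
    by (rule has_sum_reindex_bij_witness[where i="\<lambda>(n,(p,L)). (L,(p,n-p))" and j="\<lambda>(L,(p,q)). (p+q,(p,L))"])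
      (auto simp: T_def h_def)
  then have reidx: "(h has_sum S) T" using fhas by simp
  have inner: "((\<lambda>y. h (n,y)) has_sum coef n) ({..n} \<times> UNIV)" for n
  proof (rule has_sum_finite_neutralI[where B="{..n} \<times> {..n}"])
    show "finite ({..n} \<times> {..n})" by simp
    show "{..n} \<times> {..n} \<subseteq> {..n} \<times> UNIV" by auto
    show "h (n, x) = 0" if "x \<in> {..n} \<times> UNIV - {..n} \<times> {..n}" for x
    proof -
      obtain p L where x: "x = (p, L)" by (cases x) auto
      with that have "p < L" by auto
      then show ?thesis by (simp add: x h_def f_def g_def u_def Gf_zero)
    qed
    have "sum (\<lambda>y. h (n,y)) ({..n} \<times> {..n}) = (\<Sum>p\<le>n. \<Sum>L\<le>n. Wf a L * u L p * v L (n-p))"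
      by (simp add: sum.cartesian_product h_def f_def g_def)
    also have "\<dots> = (\<Sum>p\<le>n. X p * Y (n-p) * z^n * (\<Sum>L<Suc n. Wf a L * Gf (a+1/2) p L * Gf (a+1/2) (n-p) L))"
    proof (rule sum.cong[OF refl])
      fix p assume "p \<in> {..n}"
      then have zz: "z^p * z^(n-p) = z^n" by (simp add: power_add[symmetric])
      show "(\<Sum>L\<le>n. Wf a L * u L p * v L (n-p)) = X p * Y (n-p) * z^n * (\<Sum>L<Suc n. Wf a L * Gf (a+1/2) p L * Gf (a+1/2) (n-p) L)"
        unfolding lessThan_Suc_atMost sum_distrib_left u_def v_def c_def
        by (rule sum.cong[OF refl]) (simp add: zz[symmetric] algebra_simps)
    qed
    also have "\<dots> = (\<Sum>p\<le>n. X p * Y (n-p) * z^n * Mf a n)"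
    proof (rule sum.cong[OF refl])
      fix p assume p: "p \<in> {..n}"
      have "(\<Sum>L<Suc n. Wf a L * Gf (a+1/2) p L * Gf (a+1/2) (n-p) L) = Mf a (p + (n-p))"
        by (rule F_main[OF am]) (use p in auto)
      also have "p + (n-p) = n" using p by simp
      finally show "X p * Y (n-p) * z^n * (\<Sum>L<Suc n. Wf a L * Gf (a+1/2) p L * Gf (a+1/2) (n-p) L) = X p * Y (n-p) * z^n * Mf a n"
        by simp
    qed
    also have "\<dots> = z^n * Mf a n * (\<Sum>p\<le>n. 1 / (fact p * pochhammer (\<mu>+1) p) * (1 / (fact (n-p) * pochhammer (\<nu>+1) (n-p))))"
      by (simp add: sum_distrib_left X_def Y_def algebra_simps)
    also have "\<dots> = pochhammer (1/2) n * pochhammer (a+1) n / (pochhammer (\<mu>+1) n * pochhammer (\<nu>+1) n * pochhammer (\<mu>+\<nu>+1) n) * z^n / fact n"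
      by (rule coef_eq[OF a2 am pm pn ps])
    also have "\<dots> = coef n" by (simp add: coef_def a_def z_def algebra_simps)
    finally show "coef n = sum (\<lambda>y. h (n,y)) ({..n} \<times> {..n})" by simp
  qed
  have coefhas: "(coef has_sum S) UNIV"
    by (rule has_sum_Sigma'[OF reidx[unfolded T_def]]) (use inner in auto)
  have S_eq: "hypergeo [1 / 2, \<mu> / 2 + \<nu> / 2 + 1] [\<mu> + 1, \<nu> + 1, \<mu> + \<nu> + 1] (- k\<^sup>2) = S"
    unfolding hypergeo_def coef_def[symmetric] using has_sum_imp_sums[OF coefhas] by (rule sums_unique[symmetric])
  have sums1: "(\<lambda>L. Wf a L * U L * V L) sums S" by (rule has_sum_imp_sums[OF Lhas])
  show ?thesis
    unfolding summand_eq[OF m1 n1 s1] unfolding Ueq[symmetric] Veq[symmetric] S_eq unfolding a_def[symmetric]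
    by (rule sums1)
qed

end
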